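(* Let $\mathsf{P}>0$, $A_{\mathsf{u},k}>0$, $\sigma_k^2>0$, $\mathsf{g}_k>0$ for $k\in\{1,2\}$, $k_0,\eta>0$, $\rho\in\mathbb{C}$ with $|\rho|<1$, $\overline{\rho}=1-|\rho|^2$. Let $\widetilde{\gamma}_{\mathsf{dl},k}(x)=\frac{A_{\mathsf{u},k}k_0^2\eta^2}{4\pi\sigma_k^2}x$ and $$\mathsf{C}_{\mathsf{dl}}=\max_{\mathsf{P}_1,\mathsf{P}_2\ge0,\ \mathsf{P}_1+\mathsf{P}_2\le\mathsf{P}}\log_2\big(1+\widetilde{\gamma}_{\mathsf{dl},1}(\mathsf{P}_1)\mathsf{g}_1+\widetilde{\gamma}_{\mathsf{dl},2}(\mathsf{P}_2)\mathsf{g}_2+\widetilde{\gamma}_{\mathsf{dl},1}(\mathsf{P}_1)\widetilde{\gamma}_{\mathsf{dl},2}(\mathsf{P}_2)\mathsf{g}_1\mathsf{g}_2\overline{\rho}\big).$$ Let $\xi=\dfrac{A_{\mathsf{u},1}\mathsf{g}_1/\sigma_1^2-A_{\mathsf{u},2}\mathsf{g}_2/\sigma_2^2}{A_{\mathsf{u},1}A_{\mathsf{u},2}k_0^2\eta^2\mathsf{g}_1\mathsf{g}_2\overline{\rho}/(4\pi\sigma_1^2\sigma_2^2)}$, $\varepsilon_1=\widetilde{\gamma}_{\mathsf{dl},1}\big(\tfrac{\mathsf{P}+\xi}{2}\big)\mathsf{g}_1$ and $\varepsilon_2=\widetilde{\gamma}_{\mathsf{dl},2}\big(\tfrac{\mathsf{P}-\xi}{2}\big)\mathsf{g}_2$.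 Then $$\mathsf{C}_{\mathsf{dl}}=\begin{cases}\log_2(1+\widetilde{\gamma}_{\mathsf{dl},1}(\mathsf{P})\mathsf{g}_1)&\xi\ge\mathsf{P},\\\log_2(1+\widetilde{\gamma}_{\mathsf{dl},2}(\mathsf{P})\mathsf{g}_2)&\xi\le-\mathsf{P},\\\log_2(1+\varepsilon_1+\varepsilon_2+\varepsilon_1\varepsilon_2\overline{\rho})&\text{otherwise}.\end{cases}$$
   Context: In the paper, the maximum defining $\mathsf{C}_{\mathsf{dl}}$ is the sum-rate capacity of the dual uplink channel, which by uplink–downlink duality equals the sum-rate capacity of the two-user downlink channel from a continuous-aperture array $\mathcal{A}$; here $\mathsf{g}_k=\int_{\mathcal{A}}|\mathsf{G}_k|^2$ are the users' channel gains and $\rho=\int_{\mathcal{A}}\mathsf{G}_1^*\mathsf{G}_2/\sqrt{\mathsf{g}_1\mathsf{g}_2}$ their channel correlation factor. *)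

theory Defs
  imports "HOL-Analysis.Analysis"
begin

definition gamma_dl :: "real \<Rightarrow> real \<Rightarrow> real \<Rightarrow> real \<Rightarrow> real \<Rightarrow> real" where
  "gamma_dl Au sigma2 k0 eta x = Au * k0^2 * eta^2 / (4 * pi * sigma2) * x"

text \<open>Downlink sum-rate capacity: maximum over the power splits (the maximum exists
  since the feasible set is compact and the objective continuous; we write it as Sup).\<close>
definition C_dl :: "real \<Rightarrow> real \<Rightarrow> real \<Rightarrow> real \<Rightarrow> real \<Rightarrow> real \<Rightarrow> real \<Rightarrow> real \<Rightarrow> real \<Rightarrow> real \<Rightarrow> real" where
  "C_dl P Au1 Au2 s1 s2 g1 g2 k0 eta rhobar =
     Sup ((\<lambda>(P1, P2). log 2 (1 + gamma_dl Au1 s1 k0 eta P1 * g1 + gamma_dl Au2 s2 k0 eta P2 * g2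
            + gamma_dl Au1 s1 k0 eta P1 * gamma_dl Au2 s2 k0 eta P2 * g1 * g2 * rhobar))
          ` {(P1, P2). P1 \<ge> 0 \<and> P2 \<ge> 0 \<and> P1 + P2 \<le> P})"

end

theory Submission
  imports Defs
begin

lemma core:
  fixes a b r P x y :: real
  assumes a: "a>0" and b: "b>0" and r: "r>0" and x: "x\<ge>0" and y: "y\<ge>0" and xy: "x+y\<le>P"
  defines "c \<equiv> (a-b)/(a*b*r)"
  shows "1 + a*x + b*y + a*x*(b*y)*r \<le> (if c \<ge> P then 1 + a*P else if c \<le> -P then 1 + b*P
     else 1 + a*((P+c)/2) + b*((P-c)/2) + a*((P+c)/2)*(b*((P-c)/2))*r)"
proof -
  define k where "k = a*b*r"
  have k: "k > 0" using a b r by (simp add: k_def)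
  have ac: "a = b + k*c" using a b r unfolding c_def k_def by simp
  have s1: "1 + a*x + b*y + a*x*(b*y)*r \<le> 1 + a*x + b*(P-x) + k*x*(P-x)"
  proof -
    have "(b + k*x)*(P-x-y) \<ge> 0" using k x b xy by (intro mult_nonneg_nonneg) auto
    thus ?thesis unfolding k_def by (simp add: algebra_simps)
  qed
  have h: "\<And>t. 1 + a*t + b*(P-t) + k*t*(P-t) = 1 + b*P + k*c*t + k*t*(P-t)"
    unfolding ac by (simp add: algebra_simps)
  have hh: "\<And>t. a*t*(b*(P-t))*r = k*t*(P-t)" unfolding k_def by (simp add: algebra_simps)
  show ?thesis
  proof (cases "c \<ge> P")
    case True
    have "k*((P-x)*(c - x)) \<ge> 0" using k xy y x True by (intro mult_nonneg_nonneg) auto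
    hence "1 + b*P + k*c*x + k*x*(P-x) \<le> 1 + b*P + k*c*P + k*P*(P-P)"
      by (simp add: algebra_simps power2_eq_square)
    then show ?thesis using s1 h[of x] h[of P] True by simp
  next
    case F: False
    show ?thesis
    proof (cases "c \<le> -P")
      case True
      have "k*(x*(x - P - c)) \<ge> 0" using k xy y x True by (intro mult_nonneg_nonneg) auto
      hence "1 + b*P + k*c*x + k*x*(P-x) \<le> 1 + b*P + k*c*0 + k*0*(P-0)"
        by (simp add: algebra_simps power2_eq_square)
      then show ?thesis using s1 h[of x] h[of 0] True F by simp
    next
      case False
      define t where "t = (P+c)/2"
      have "k*((t-x)*(t-x)) \<ge> 0" using k by simp
      moreover have "(1 + b*P + k*c*t + k*t*(P-t)) - (1 + b*P + k*c*x + k*x*(P-x)) = k*((t-x)*(t-x))"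
        unfolding t_def by (simp add: field_simps power2_eq_square)
      ultimately have "1 + b*P + k*c*x + k*x*(P-x) \<le> 1 + b*P + k*c*t + k*t*(P-t)" by linarith
      moreover have "a*((P+c)/2) + b*((P-c)/2) + a*((P+c)/2)*(b*((P-c)/2))*r
          = a*t + b*(P-t) + k*t*(P-t)"
      proof -
        have e1: "(P+c)/2 = t" and e2: "(P-c)/2 = P - t" unfolding t_def by (simp_all add: field_simps)
        show ?thesis unfolding e1 e2 using hh[of t] by simp
      qed
      ultimately show ?thesis using s1 h[of x] h[of t] False F by simp
    qed
  qed
qed
theorem theorem5:
  fixes P Au1 Au2 s1 s2 g1 g2 k0 eta :: real and rho :: complex
  assumes "P > 0" "Au1 > 0" "Au2 > 0" "s1 > 0" "s2 > 0" "g1 > 0" "g2 > 0"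
    and "k0 > 0" "eta > 0" and "cmod rho < 1"
  defines "rhobar \<equiv> 1 - (cmod rho)^2"
  defines "xi \<equiv> (Au1 * g1 / s1 - Au2 * g2 / s2) /
              (Au1 * Au2 * k0^2 * eta^2 * g1 * g2 * rhobar / (4 * pi * s1 * s2))"
  defines "eps1 \<equiv> gamma_dl Au1 s1 k0 eta ((P + xi) / 2) * g1"
  defines "eps2 \<equiv> gamma_dl Au2 s2 k0 eta ((P - xi) / 2) * g2"
  shows "C_dl P Au1 Au2 s1 s2 g1 g2 k0 eta rhobar =
          (if xi \<ge> P then log 2 (1 + gamma_dl Au1 s1 k0 eta P * g1)
           else if xi \<le> - P then log 2 (1 + gamma_dl Au2 s2 k0 eta P * g2)
           else log 2 (1 + eps1 + eps2 + eps1 * eps2 * rhobar))"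
proof -
  define a where "a = Au1 * k0^2 * eta^2 / (4 * pi * s1) * g1"
  define b where "b = Au2 * k0^2 * eta^2 / (4 * pi * s2) * g2"
  have ga: "\<And>x. gamma_dl Au1 s1 k0 eta x * g1 = a * x" unfolding a_def gamma_dl_def by simp
  have gb: "\<And>x. gamma_dl Au2 s2 k0 eta x * g2 = b * x" unfolding b_def gamma_dl_def by simp
  have a: "a > 0" unfolding a_def using assms(2,4,6,8,9) by simp
  have b: "b > 0" unfolding b_def using assms(3,5,7,8,9) by simp
  have "(cmod rho)^2 < 1" using assms(10) norm_ge_zero[of rho]
    by (metis abs_norm_cancel abs_square_less_1)
  hence r: "rhobar > 0" unfolding rhobar_def by simp
  have xi: "xi = (a-b)/(a*b*rhobar)" unfolding xi_def a_def b_def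
    using assms(2-9) r by (simp add: field_simps power2_eq_square)
  have obj: "\<And>x y. 1 + gamma_dl Au1 s1 k0 eta x * g1 + gamma_dl Au2 s2 k0 eta y * g2
            + gamma_dl Au1 s1 k0 eta x * gamma_dl Au2 s2 k0 eta y * g1 * g2 * rhobar
         = 1 + a*x + b*y + a*x*(b*y)*rhobar"
  proof -
    fix x y
    have "gamma_dl Au1 s1 k0 eta x * gamma_dl Au2 s2 k0 eta y * g1 * g2 * rhobar
       = (gamma_dl Au1 s1 k0 eta x * g1) * (gamma_dl Au2 s2 k0 eta y * g2) * rhobar"
      by (simp add: algebra_simps)
    thus "1 + gamma_dl Au1 s1 k0 eta x * g1 + gamma_dl Au2 s2 k0 eta y * g2
            + gamma_dl Au1 s1 k0 eta x * gamma_dl Au2 s2 k0 eta y * g1 * g2 * rhobar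
         = 1 + a*x + b*y + a*x*(b*y)*rhobar" by (simp add: ga gb)
  qed
  define V where "V = (if xi \<ge> P then 1 + a*P else if xi \<le> -P then 1 + b*P
     else 1 + a*((P+xi)/2) + b*((P-xi)/2) + a*((P+xi)/2)*(b*((P-xi)/2))*rhobar)"
  have rhs: "(if xi \<ge> P then log 2 (1 + gamma_dl Au1 s1 k0 eta P * g1)
           else if xi \<le> - P then log 2 (1 + gamma_dl Au2 s2 k0 eta P * g2)
           else log 2 (1 + eps1 + eps2 + eps1 * eps2 * rhobar)) = log 2 V"
    unfolding V_def eps1_def eps2_def ga gb by (simp add: algebra_simps)
  let ?f = "\<lambda>(P1, P2). log 2 (1 + a*P1 + b*P2 + a*P1*(b*P2)*rhobar)"
  let ?D = "{(P1, P2). P1 \<ge> 0 \<and> P2 \<ge> 0 \<and> P1 + P2 \<le> (P::real)}"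
  have C: "C_dl P Au1 Au2 s1 s2 g1 g2 k0 eta rhobar = Sup (?f ` ?D)"
    unfolding C_dl_def obj by simp
  have pos: "\<And>x y. x \<ge> 0 \<Longrightarrow> y \<ge> 0 \<Longrightarrow> 1 + a*x + b*y + a*x*(b*y)*rhobar > 0"
    using a b r by (simp add: add_pos_nonneg)
  have mem: "log 2 V \<in> ?f ` ?D"
  proof (cases "xi \<ge> P")
    case True
    hence "log 2 V = ?f (P, 0)" unfolding V_def by simp
    moreover have "(P, 0) \<in> ?D" using assms(1) by simp
    ultimately show ?thesis by blast
  next
    case F: False
    show ?thesis
    proof (cases "xi \<le> -P")
      case True
      hence "log 2 V = ?f (0, P)" unfolding V_def using F by simp
      moreover have "(0, P) \<in> ?D" using assms(1) by simp
      ultimately show ?thesis by blast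
    next
      case False
      hence "log 2 V = ?f ((P+xi)/2, (P-xi)/2)" unfolding V_def using F by simp
      moreover have "((P+xi)/2, (P-xi)/2) \<in> ?D" using F False by (simp add: field_simps)
      ultimately show ?thesis by blast
    qed
  qed
  have ub: "\<And>z. z \<in> ?f ` ?D \<Longrightarrow> z \<le> log 2 V"
  proof -
    fix z assume "z \<in> ?f ` ?D"
    then obtain x y where xy: "x \<ge> 0" "y \<ge> 0" "x + y \<le> P"
      and z: "z = log 2 (1 + a*x + b*y + a*x*(b*y)*rhobar)" by auto
    have le: "1 + a*x + b*y + a*x*(b*y)*rhobar \<le> V"
      using core[OF a b r xy] unfolding V_def xi by simp
    show "z \<le> log 2 V" unfolding z using le pos[OF xy(1,2)] by simp
  qed
  have "Sup (?f ` ?D) = log 2 V" by (rule cSup_eq_maximum[OF mem ub])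
  thus ?thesis using C rhs by simp
qed

end
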